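(* Let $(p_{ij})_{i,j\in\{0,1\}}$ be a transition matrix with all $p_{ij}\in(0,1)$ and $p_{ij}\ne\tfrac12$ for some $(i,j)$; for $i\in\{0,1\}$ let $I_n^i\sim B(n,p_{i0})$. Let $(X_n^i,Z_n^i)_{n\in\mathbb N_0}$, $i\in\{0,1\}$, be random variables with finite second moments such that $X_n^i=Z_n^i=0$ for $n\le1$ and, for all $n\ge2$ and $i\in\{0,1\}$, $$\begin{pmatrix}X_n^i\\ Z_n^i\end{pmatrix}\stackrel{d}{=}\begin{pmatrix}X^0_{I_n^i}\\ Z^0_{I_n^i}\end{pmatrix}+\begin{pmatrix}X^1_{n-I_n^i}\\ Z^1_{n-I_n^i}\end{pmatrix}+\begin{pmatrix}\eta_n^{i,1}\\ \eta_n^{i,2}\end{pmatrix},$$ where on the right the families $(X^0_k,Z^0_k)_{k\le n}$, $(X^1_k,Z^1_k)_{k\le n}$ and $I_n^i$ are independent, and $$\eta_n^{i,1}=\frac1H\Big(n\log n-\mathbb E\big[I_n^i\log I_n^i+(n-I_n^i)\log(n-I_n^i)\big]\Big)+\pi_{1-i}\frac{H_{1-i}-H_i}{H}n+\frac{H_1-H_0}{(p_{01}+p_{10})H}p_{i0}p_{i1}^{n-1}n,\quad \eta_n^{i,2}=n-\eta_n^{i,1}$$ (for $n\ge2$; $\eta_n^{i,1}=\eta_n^{i,2}=0$ for $n\le1$). Then for all $n\in\mathbb N_0$, $$\mathbb E[X_n^0]=\frac1H n\log n+\frac{H_1-H_0}{(p_{01}+p_{10})H}n\mathbf 1_{\{n\ge2\}},\qquad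 \mathbb E[X_n^1]=\frac1H n\log n.$$
   Context: $0\log0:=0$. $\pi_0=p_{10}/(p_{01}+p_{10})$, $\pi_1=p_{01}/(p_{01}+p_{10})$, $H_i=-\sum_jp_{ij}\log p_{ij}$, $H=\pi_0H_0+\pi_1H_1$. *)

theory Defs
  imports "HOL-Probability.Probability"
begin

text \<open>Convention 0 log 0 = 0 (natural logarithm; the claimed identities are base independent).\<close>
definition xlogx :: "real \<Rightarrow> real" where
  "xlogx x = (if x = 0 then 0 else x * ln x)"

definition Hent :: "(nat \<Rightarrow> nat \<Rightarrow> real) \<Rightarrow> nat \<Rightarrow> real" where
  "Hent p i = - (\<Sum>j<2. xlogx (p i j))"

definition piv :: "(nat \<Rightarrow> nat \<Rightarrow> real) \<Rightarrow> nat \<Rightarrow> real" where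
  "piv p i = (if i = 0 then p 1 0 else p 0 1) / (p 0 1 + p 1 0)"

definition Htot :: "(nat \<Rightarrow> nat \<Rightarrow> real) \<Rightarrow> real" where
  "Htot p = piv p 0 * Hent p 0 + piv p 1 * Hent p 1"

definition eta1 :: "(nat \<Rightarrow> nat \<Rightarrow> real) \<Rightarrow> nat \<Rightarrow> nat \<Rightarrow> real" where
  "eta1 p i n = (if n \<le> 1 then 0 else
      (xlogx (real n) - measure_pmf.expectation (binomial_pmf n (p i 0))
          (\<lambda>k. xlogx (real k) + xlogx (real (n - k)))) / Htot p
      + piv p (1 - i) * (Hent p (1 - i) - Hent p i) / Htot p * real n
      + (Hent p 1 - Hent p 0) / ((p 0 1 + p 1 0) * Htot p) * p i 0 * p i 1 ^ (n - 1) * real n)"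

definition eta2 :: "(nat \<Rightarrow> nat \<Rightarrow> real) \<Rightarrow> nat \<Rightarrow> nat \<Rightarrow> real" where
  "eta2 p i n = (if n \<le> 1 then 0 else real n - eta1 p i n)"

definition law :: "'a measure \<Rightarrow> (nat \<Rightarrow> nat \<Rightarrow> 'a \<Rightarrow> real) \<Rightarrow> (nat \<Rightarrow> nat \<Rightarrow> 'a \<Rightarrow> real)
    \<Rightarrow> nat \<Rightarrow> nat \<Rightarrow> (real \<times> real) measure" where
  "law M X Z i n = distr M borel (\<lambda>\<omega>. (X i n \<omega>, Z i n \<omega>))"

text \<open>Law of the right-hand side of the distributional recursion:
  (X^0_{I}, Z^0_{I}) + (X^1_{n-I}, Z^1_{n-I}) + (eta1, eta2) with I ~ B(n, p i 0)
  and the two families and I independent.  Since I is independent of the families,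
  this law is the binomial mixture over k of the laws of independent sums.\<close>
definition rhs_law :: "(nat \<Rightarrow> nat \<Rightarrow> real) \<Rightarrow> (nat \<Rightarrow> nat \<Rightarrow> (real \<times> real) measure)
    \<Rightarrow> nat \<Rightarrow> nat \<Rightarrow> (real \<times> real) measure" where
  "rhs_law p L i n = measure_pmf (binomial_pmf n (p i 0)) \<bind>
     (\<lambda>k. distr (L 0 k \<Otimes>\<^sub>M L 1 (n - k)) borel
        (\<lambda>((x0, z0), (x1, z1)). (x0 + x1 + eta1 p i n, z0 + z1 + eta2 p i n)))"

end

theory Submission imports Defs begin


lemma bind_nonneg:
  fixes B :: "nat pmf" and K :: "nat \<Rightarrow> 'b measure" and g :: "'b \<Rightarrow> real"
  assumes A: "finite A" "set_pmf B \<subseteq> A"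
    and K: "\<And>k. prob_space (K k)" "\<And>k. sets (K k) = sets N"
    and g: "g \<in> borel_measurable N" "\<And>x. 0 \<le> g x"
    and int: "\<And>k. integrable (K k) g"
  shows "integrable (measure_pmf B \<bind> K) g \<and> integral\<^sup>L (measure_pmf B \<bind> K) g = (\<Sum>k\<in>A. pmf B k * integral\<^sup>L (K k) g)"
proof -
  have Km: "K \<in> measurable (measure_pmf B) (subprob_algebra N)"
    by (simp add: measurable_cong_sets[OF sets_measure_pmf_count_space refl] space_subprob_algebra K prob_space_imp_subprob_space)
  have sb: "sets (measure_pmf B \<bind> K) = sets N"
    by (rule sets_bind) (auto simp: K)
  have gm: "g \<in> borel_measurable (measure_pmf B \<bind> K)"
    using g(1) measurable_cong_sets[OF sb refl] by blast
  have "(\<integral>\<^sup>+x. ennreal (g x) \<partial>(measure_pmf B \<bind> K)) = (\<integral>\<^sup>+k. \<integral>\<^sup>+x. ennreal (g x) \<partial>K k \<partial>measure_pmf B)"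
    by (rule nn_integral_bind[OF _ Km]) (use g in simp)
  also have "\<dots> = (\<integral>\<^sup>+k. ennreal (integral\<^sup>L (K k) g) \<partial>measure_pmf B)"
    by (intro nn_integral_cong nn_integral_eq_integral) (auto simp: int g)
  also have "\<dots> = (\<Sum>k\<in>A. ennreal (integral\<^sup>L (K k) g) * pmf B k)"
    by (rule nn_integral_measure_pmf_support) (use A in auto)
  also have "\<dots> = ennreal (\<Sum>k\<in>A. pmf B k * integral\<^sup>L (K k) g)"
    by (subst sum_ennreal[symmetric]) (auto simp: ennreal_mult' g mult.commute intro!: sum.cong integral_nonneg_AE)
  finally have nn: "(\<integral>\<^sup>+x. ennreal (g x) \<partial>(measure_pmf B \<bind> K)) = ennreal (\<Sum>k\<in>A. pmf B k * integral\<^sup>L (K k) g)" .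
  have S0: "0 \<le> (\<Sum>k\<in>A. pmf B k * integral\<^sup>L (K k) g)"
    by (auto intro!: sum_nonneg integral_nonneg_AE simp: g)
  have "integrable (measure_pmf B \<bind> K) g"
    using nn gm g(2) by (subst integrable_iff_bounded) simp
  moreover have "integral\<^sup>L (measure_pmf B \<bind> K) g = (\<Sum>k\<in>A. pmf B k * integral\<^sup>L (K k) g)"
    using integral_eq_nn_integral[OF gm] nn S0 g(2) by simp
  ultimately show ?thesis by blast
qed

lemma bind_integral:
  fixes B :: "nat pmf" and K :: "nat \<Rightarrow> 'b measure" and f :: "'b \<Rightarrow> real"
  assumes A: "finite A" "set_pmf B \<subseteq> A"
    and K: "\<And>k. prob_space (K k)" "\<And>k. sets (K k) = sets N"
    and f: "f \<in> borel_measurable N"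
    and int: "\<And>k. integrable (K k) f"
  shows "integral\<^sup>L (measure_pmf B \<bind> K) f = (\<Sum>k\<in>A. pmf B k * integral\<^sup>L (K k) f)"
proof -
  define gp where "gp x = max (f x) 0" for x
  define gn where "gn x = max (- f x) 0" for x
  have ip: "\<And>k. integrable (K k) gp" and inn: "\<And>k. integrable (K k) gn"
    unfolding gp_def gn_def using int by auto
  have mp: "gp \<in> borel_measurable N" "gn \<in> borel_measurable N" unfolding gp_def gn_def using f by auto
  have P: "integrable (measure_pmf B \<bind> K) gp \<and> integral\<^sup>L (measure_pmf B \<bind> K) gp = (\<Sum>k\<in>A. pmf B k * integral\<^sup>L (K k) gp)"
    by (rule bind_nonneg[OF A K mp(1) _ ip]) (simp add: gp_def)
  have Q: "integrable (measure_pmf B \<bind> K) gn \<and> integral\<^sup>L (measure_pmf B \<bind> K) gn = (\<Sum>k\<in>A. pmf B k * integral\<^sup>L (K k) gn)"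
    by (rule bind_nonneg[OF A K mp(2) _ inn]) (simp add: gn_def)
  have fe: "f = (\<lambda>x. gp x - gn x)" unfolding gp_def gn_def by (auto simp: fun_eq_iff)
  have "integral\<^sup>L (measure_pmf B \<bind> K) f = integral\<^sup>L (measure_pmf B \<bind> K) gp - integral\<^sup>L (measure_pmf B \<bind> K) gn"
    using P Q by (subst fe) (rule Bochner_Integration.integral_diff; simp)
  also have "\<dots> = (\<Sum>k\<in>A. pmf B k * (integral\<^sup>L (K k) gp - integral\<^sup>L (K k) gn))"
    using P Q by (simp add: sum_subtractf right_diff_distrib)
  also have "\<dots> = (\<Sum>k\<in>A. pmf B k * integral\<^sup>L (K k) f)"
  proof (rule sum.cong[OF refl])
    fix k show "pmf B k * (integral\<^sup>L (K k) gp - integral\<^sup>L (K k) gn) = pmf B k * integral\<^sup>L (K k) f"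
      using Bochner_Integration.integral_diff[OF ip[of k] inn[of k]] fe by simp
  qed
  finally show ?thesis .
qed

lemma fst_borel: "(fst :: real\<times>real \<Rightarrow> real) \<in> borel_measurable borel"
  by (rule borel_measurable_continuous_onI) (intro continuous_on_fst continuous_on_id)

lemma distr_pair_snd':
  assumes "prob_space P" "prob_space Q"
  shows "distr (P \<Otimes>\<^sub>M Q) Q snd = Q"
proof -
  interpret P: prob_space P by fact
  interpret Q: prob_space Q by fact
  interpret pair_sigma_finite P Q by unfold_locales
  have "P \<Otimes>\<^sub>M Q = distr (Q \<Otimes>\<^sub>M P) (P \<Otimes>\<^sub>M Q) (\<lambda>(x,y). (y,x))" by (rule distr_pair_swap)
  then have "distr (P \<Otimes>\<^sub>M Q) Q snd = distr (distr (Q \<Otimes>\<^sub>M P) (P \<Otimes>\<^sub>M Q) (\<lambda>(x,y). (y,x))) Q snd"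
    by (rule arg_cong[of _ _ "\<lambda>M. distr M Q snd"])
  also have "\<dots> = distr (Q \<Otimes>\<^sub>M P) Q (\<lambda>w. snd (case w of (x,y) \<Rightarrow> (y,x)))"
    by (subst distr_distr) (auto simp: comp_def)
  also have "\<dots> = distr (Q \<Otimes>\<^sub>M P) Q fst" by (rule distr_cong) (auto simp: case_prod_beta)
  also have "\<dots> = Q" by (rule P.distr_pair_fst)
  finally show ?thesis .
qed

lemma prod_part:
  fixes P Q :: "(real \<times> real) measure" and e1 e2 :: real
  assumes P: "prob_space P" "sets P = sets borel" and Q: "prob_space Q" "sets Q = sets borel"
    and iP: "integrable P fst" and iQ: "integrable Q fst"
  defines "D \<equiv> distr (P \<Otimes>\<^sub>M Q) borel (\<lambda>((x0, z0), (x1, z1)). (x0 + x1 + e1, z0 + z1 + e2))"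
  shows "prob_space D \<and> sets D = sets borel \<and> integrable D fst \<and>
     integral\<^sup>L D fst = integral\<^sup>L P fst + integral\<^sup>L Q fst + e1"
proof -
  interpret P: prob_space P by fact
  interpret Q: prob_space Q by fact
  interpret PQ: pair_prob_space P Q by unfold_locales
  have sPQ: "sets (P \<Otimes>\<^sub>M Q) = sets (borel \<Otimes>\<^sub>M borel)"
    using P(2) Q(2) by (intro sets_pair_measure_cong) auto
  have hm: "(\<lambda>((x0, z0), (x1, z1)). (x0 + x1 + e1, z0 + z1 + e2)) \<in> measurable (P \<Otimes>\<^sub>M Q) (borel :: (real\<times>real) measure)"
  proof -
    have e: "(\<lambda>((x0, z0), (x1, z1)). (x0 + x1 + e1, z0 + z1 + e2)) = (\<lambda>w::(real\<times>real)\<times>(real\<times>real). (fst (fst w) + fst (snd w) + e1, snd (fst w) + snd (snd w) + e2))"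
      by (auto simp: fun_eq_iff split: prod.splits)
    have s2: "sets (P \<Otimes>\<^sub>M Q) = sets (borel :: ((real\<times>real)\<times>(real\<times>real)) measure)"
      using sPQ by (metis borel_prod)
    show ?thesis unfolding e measurable_cong_sets[OF s2 refl]
      by (intro borel_measurable_continuous_onI continuous_intros)
  qed
  have ps: "prob_space D" unfolding D_def by (rule PQ.prob_space_distr[OF hm])
  have ff: "fst \<in> measurable P (borel::real measure)" unfolding measurable_cong_sets[OF P(2) refl] by (rule fst_borel)
  have fQ: "fst \<in> measurable Q (borel::real measure)" unfolding measurable_cong_sets[OF Q(2) refl] by (rule fst_borel)
  have m1: "fst \<in> measurable (P \<Otimes>\<^sub>M Q) P" by simp
  have m2: "snd \<in> measurable (P \<Otimes>\<^sub>M Q) Q" by simp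
  have dP: "distr (P \<Otimes>\<^sub>M Q) P fst = P" by (rule Q.distr_pair_fst)
  have dQ: "distr (P \<Otimes>\<^sub>M Q) Q snd = Q" by (rule distr_pair_snd'[OF P(1) Q(1)])
  have i1: "integrable (P \<Otimes>\<^sub>M Q) (\<lambda>w. fst (fst w))"
    using integrable_distr_eq[OF m1 ff] iP dP by simp
  have i2: "integrable (P \<Otimes>\<^sub>M Q) (\<lambda>w. fst (snd w))"
    using integrable_distr_eq[OF m2 fQ] iQ dQ by simp
  have I1: "integral\<^sup>L (P \<Otimes>\<^sub>M Q) (\<lambda>w. fst (fst w)) = integral\<^sup>L P fst"
    using integral_distr[OF m1 ff] dP by simp
  have I2: "integral\<^sup>L (P \<Otimes>\<^sub>M Q) (\<lambda>w. fst (snd w)) = integral\<^sup>L Q fst"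
    using integral_distr[OF m2 fQ] dQ by simp
  have eq: "(\<lambda>w. fst ((\<lambda>((x0, z0), (x1, z1)). (x0 + x1 + e1, z0 + z1 + e2)) w)) = (\<lambda>w. fst (fst w) + fst (snd w) + e1)"
    by (auto simp: fun_eq_iff split: prod.splits)
  have fb: "fst \<in> borel_measurable (borel :: (real\<times>real) measure)" by (rule fst_borel)
  have "integrable D fst" unfolding D_def integrable_distr_eq[OF hm fb] eq
    using i1 i2 by auto
  moreover have "integral\<^sup>L D fst = integral\<^sup>L P fst + integral\<^sup>L Q fst + e1"
    unfolding D_def integral_distr[OF hm fb] eq using i1 i2 I1 I2 PQ.prob_space
    by (simp add: Bochner_Integration.integral_add prob_space.prob_space)
  ultimately show ?thesis using ps unfolding D_def by simp
qed


lemma binom_one: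
  fixes q :: real
  shows "(\<Sum>k\<le>n. real (n choose k) * q^k * (1-q)^(n-k)) = 1"
  using binomial_ring[of q "1-q" n] by simp

lemma binom_mean:
  fixes q :: real
  shows "(\<Sum>k\<le>n. real (n choose k) * q^k * (1-q)^(n-k) * real k) = real n * q"
proof (cases n)
  case 0 then show ?thesis by simp
next
  case (Suc m)
  have "(\<Sum>k\<le>Suc m. real (Suc m choose k) * q^k * (1-q)^(Suc m-k) * real k)
      = (\<Sum>j\<le>m. real (Suc m choose Suc j) * q^(Suc j) * (1-q)^(Suc m - Suc j) * real (Suc j))"
    by (subst sum.atMost_Suc_shift) simp
  also have "\<dots> = (\<Sum>j\<le>m. real (Suc m) * q * (real (m choose j) * q^j * (1-q)^(m-j)))"
  proof (rule sum.cong[OF refl])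
    fix j
    have "real (Suc m choose Suc j) * real (Suc j) = real (Suc m) * real (m choose j)"
      using Suc_times_binomial_eq[of m j] by (metis of_nat_mult)
    then show "real (Suc m choose Suc j) * q^(Suc j) * (1-q)^(Suc m - Suc j) * real (Suc j)
        = real (Suc m) * q * (real (m choose j) * q^j * (1-q)^(m-j))"
    proof -
      have "real (Suc m choose Suc j) * q^(Suc j) * (1-q)^(Suc m - Suc j) * real (Suc j)
          = (real (Suc m choose Suc j) * real (Suc j)) * q * (q^j * (1-q)^(m-j))" by simp
      also have "\<dots> = real (Suc m) * q * (real (m choose j) * q^j * (1-q)^(m-j))"
        unfolding \<open>real (Suc m choose Suc j) * real (Suc j) = real (Suc m) * real (m choose j)\<close> by simp
      finally show ?thesis .
    qed
  qed
  also have "\<dots> = real (Suc m) * q * (\<Sum>j\<le>m. real (m choose j) * q^j * (1-q)^(m-j))"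
    by (simp only: sum_distrib_left)
  also have "\<dots> = real (Suc m) * q" by (simp only: binom_one mult_1_right)
  finally show ?thesis using Suc by simp
qed

lemma two_eq:
  fixes a b c d x y :: real
  assumes "0 \<le> a" "0 \<le> b" "0 \<le> c" "0 \<le> d" "a + b < 1" "c + d < 1"
    and "x = a * x + b * y" "y = c * x + d * y"
  shows "x = 0 \<and> y = 0"
proof (cases "\<bar>y\<bar> \<le> \<bar>x\<bar>")
  case True
  have "\<bar>x\<bar> \<le> a * \<bar>x\<bar> + b * \<bar>y\<bar>"
    using assms(7) abs_triangle_ineq[of "a*x" "b*y"] assms(1,2) by (simp add: abs_mult)
  also have "\<dots> \<le> a * \<bar>x\<bar> + b * \<bar>x\<bar>" using True assms(2) by (simp add: mult_left_mono)
  finally have h: "(1 - a - b) * \<bar>x\<bar> \<le> 0" by (simp add: algebra_simps)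
  have x: "x = 0"
  proof (rule ccontr)
    assume "x \<noteq> 0" then have "0 < (1-a-b)*\<bar>x\<bar>" using assms(5) by (intro mult_pos_pos) auto
    then show False using h by linarith
  qed
  then have "(1 - d) * y = 0" using assms(8) by (simp add: algebra_simps)
  then show ?thesis using x assms(3,6) by simp
next
  case False
  have "\<bar>y\<bar> \<le> c * \<bar>x\<bar> + d * \<bar>y\<bar>"
    using assms(8) abs_triangle_ineq[of "c*x" "d*y"] assms(3,4) by (simp add: abs_mult)
  also have "\<dots> \<le> c * \<bar>y\<bar> + d * \<bar>y\<bar>" using False assms(3) by (simp add: mult_left_mono)
  finally have h: "(1 - c - d) * \<bar>y\<bar> \<le> 0" by (simp add: algebra_simps)
  have y: "y = 0"
  proof (rule ccontr)
    assume "y \<noteq> 0" then have "0 < (1-c-d)*\<bar>y\<bar>" using assms(6) by (intro mult_pos_pos) auto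
    then show False using h by linarith
  qed
  then have "(1 - a) * x = 0" using assms(7) by (simp add: algebra_simps)
  then show ?thesis using y assms(1,2,5) by auto
qed



definition F0 :: "(nat \<Rightarrow> nat \<Rightarrow> real) \<Rightarrow> nat \<Rightarrow> real" where
  "F0 p n = xlogx (real n) / Htot p
                + (Hent p 1 - Hent p 0) / ((p 0 1 + p 1 0) * Htot p) * real n
                  * (if n \<ge> 2 then 1 else 0)"
definition F1 :: "(nat \<Rightarrow> nat \<Rightarrow> real) \<Rightarrow> nat \<Rightarrow> real" where
  "F1 p n = xlogx (real n) / Htot p"

lemma Htot_pos:
  assumes p_range: "\<And>i j. i \<le> 1 \<Longrightarrow> j \<le> 1 \<Longrightarrow> 0 < p i j \<and> p i j < 1"
  shows "0 < Htot p" "0 < p 0 1 + p 1 0"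
proof -
  have xl: "xlogx x < 0" if "0 < x" "x < 1" for x
    using that by (simp add: xlogx_def mult_pos_neg)
  have H: "0 < Hent p i" if "i \<le> 1" for i
    using xl[of "p i 0"] xl[of "p i 1"] p_range[of i 0] p_range[of i 1] that
    by (simp add: Hent_def numeral_2_eq_2 lessThan_Suc)
  show "0 < p 0 1 + p 1 0" using p_range[of 0 1] p_range[of 1 0] by simp
  then show "0 < Htot p"
    using H[of 0] H[of 1] p_range[of 0 1] p_range[of 1 0]
    by (simp add: Htot_def piv_def add_pos_pos)
qed

lemma ind_sum:
  fixes q :: real
  assumes "2 \<le> n"
  shows "(\<Sum>k\<le>n. real (n choose k) * q^k * (1-q)^(n-k) * (real k * (if 2 \<le> k then 1 else 0)))
     = real n * q - real n * q * (1-q)^(n-1)"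
proof -
  have e: "real (n choose k) * q^k * (1-q)^(n-k) * real k
     = real (n choose k) * q^k * (1-q)^(n-k) * (real k * (if 2 \<le> k then 1 else 0))
       + (if k = 1 then real n * q * (1-q)^(n-1) else 0)" for k
  proof (cases "2 \<le> k")
    case True then show ?thesis by simp
  next
    case False
    then have "k = 0 \<or> k = 1" by linarith
    then show ?thesis by (elim disjE) simp_all
  qed
  have "real n * q = (\<Sum>k\<le>n. real (n choose k) * q^k * (1-q)^(n-k) * real k)"
    by (rule binom_mean[symmetric])
  also have "\<dots> = (\<Sum>k\<le>n. real (n choose k) * q^k * (1-q)^(n-k) * (real k * (if 2 \<le> k then 1 else 0)))
       + (\<Sum>k\<le>n. (if k = 1 then real n * q * (1-q)^(n-1) else 0))"
    unfolding e by (rule sum.distrib)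
  also have "(\<Sum>k\<le>n. (if k = 1 then real n * q * (1-q)^(n-1) else 0)) = real n * q * (1-q)^(n-1)"
    using assms by (subst sum.delta) auto
  finally show ?thesis by simp
qed
lemma f_rec:
  assumes p_range: "\<And>i j. i \<le> 1 \<Longrightarrow> j \<le> 1 \<Longrightarrow> 0 < p i j \<and> p i j < 1"
    and p_stoch: "\<And>i. i \<le> 1 \<Longrightarrow> p i 0 + p i 1 = 1"
    and i: "i \<le> 1" and n: "2 \<le> n"
  shows "(\<Sum>k\<le>n. real (n choose k) * p i 0 ^ k * (1 - p i 0)^(n-k) * (F0 p k + F1 p (n-k) + eta1 p i n))
     = (if i = 0 then F0 p n else F1 p n)"
proof -
  define q where "q = p i 0"
  define H where "H = Htot p"
  define c where "c = (Hent p 1 - Hent p 0) / ((p 0 1 + p 1 0) * Htot p)"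
  define S where "S = (\<Sum>k\<le>n. real (n choose k) * q^k * (1-q)^(n-k) * (xlogx (real k) + xlogx (real (n-k))))"
  have q01: "q \<in> {0..1}" using p_range[OF i, of 0] by (simp add: q_def)
  have ex: "measure_pmf.expectation (binomial_pmf n q) (\<lambda>k. xlogx (real k) + xlogx (real (n - k))) = S"
    unfolding S_def by (subst expectation_binomial_pmf'[OF q01]) (simp add: mult.assoc)
  have r: "p i 1 = 1 - q" using p_stoch[OF i] by (simp add: q_def)
  have eta: "eta1 p i n = (xlogx (real n) - S) / H + piv p (1 - i) * (Hent p (1 - i) - Hent p i) / H * real n
     + c * q * (1-q) ^ (n - 1) * real n"
    using n unfolding eta1_def ex[unfolded q_def, symmetric] q_def H_def c_def r[unfolded q_def] by simp
  define e where "e = eta1 p i n"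
  have summ: "\<And>k. real (n choose k) * q ^ k * (1 - q)^(n-k) * (F0 p k + F1 p (n-k) + e)
     = real (n choose k) * q^k * (1-q)^(n-k) * (xlogx (real k) + xlogx (real (n-k))) / H
       + c * (real (n choose k) * q^k * (1-q)^(n-k) * (real k * (if 2 \<le> k then 1 else 0)))
       + e * (real (n choose k) * q^k * (1-q)^(n-k))"
    by (simp add: F0_def F1_def H_def c_def algebra_simps add_divide_distrib)
  have "(\<Sum>k\<le>n. real (n choose k) * p i 0 ^ k * (1 - p i 0)^(n-k) * (F0 p k + F1 p (n-k) + eta1 p i n))
     = S / H + c * (real n * q - real n * q * (1-q)^(n-1)) + e"
    unfolding q_def[symmetric] e_def[symmetric] summ
    by (simp add: sum.distrib S_def sum_divide_distrib[symmetric] sum_distrib_left[symmetric] ind_sum[OF n] binom_one)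
  also have "\<dots> = (if i = 0 then F0 p n else F1 p n)"
  proof -
    have Hp: "0 < H" "0 < p 0 1 + p 1 0" using Htot_pos[OF p_range] by (auto simp: H_def)
    have D0: "p 0 1 + p 1 0 \<noteq> 0" and H0: "Htot p \<noteq> 0" using Hp by (auto simp: H_def)
    show ?thesis
    proof (cases "i = 0")
      case True
      have p01: "p 0 1 = 1 - q" using p_stoch[of 0] True by (simp add: q_def)
      have pv: "piv p (1 - i) * (Hent p (1 - i) - Hent p i) / H = (1 - q) * c"
        using True D0 H0 unfolding piv_def c_def H_def p01[symmetric] by (simp add: field_simps)
      have F0n: "F0 p n = xlogx (real n) / H + c * real n" using n by (simp add: F0_def H_def c_def)
      show ?thesis using True n unfolding e_def eta pv
        by (simp add: F0n diff_divide_distrib algebra_simps)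
    next
      case False
      then have i1: "i = 1" using i by simp
      have pv: "piv p (1 - i) * (Hent p (1 - i) - Hent p i) / H = - q * c"
        using i1 D0 H0 unfolding piv_def c_def H_def q_def by (simp add: field_simps)
      show ?thesis using i1 n unfolding e_def eta pv
        by (simp add: F1_def H_def[symmetric] diff_divide_distrib algebra_simps)
    qed
  qed
  finally show ?thesis .
qed

lemma pow_lt: fixes x :: real assumes "0 < x" "x < 1" "2 \<le> n" shows "x ^ n < x"
  using power_strict_decreasing[of 1 n x] assms by simp

lemma alg_main:
  fixes e :: "nat \<Rightarrow> nat \<Rightarrow> real"
  assumes p_range: "\<And>i j. i \<le> 1 \<Longrightarrow> j \<le> 1 \<Longrightarrow> 0 < p i j \<and> p i j < 1"
    and p_stoch: "\<And>i. i \<le> 1 \<Longrightarrow> p i 0 + p i 1 = 1"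
    and e0: "\<And>i n. i \<le> 1 \<Longrightarrow> n \<le> 1 \<Longrightarrow> e i n = 0"
    and erec: "\<And>i n. i \<le> 1 \<Longrightarrow> 2 \<le> n \<Longrightarrow> e i n =
       (\<Sum>k\<le>n. real (n choose k) * p i 0 ^ k * (1 - p i 0)^(n-k) * (e 0 k + e 1 (n-k) + eta1 p i n))"
  shows "e 0 n = F0 p n \<and> e 1 n = F1 p n"
proof (induction n rule: less_induct)
  case (less n)
  show ?case
  proof (cases "n \<le> 1")
    case True
    then have "n = 0 \<or> n = 1" by linarith
    then show ?thesis using e0[of 0 n] e0[of 1 n] True by (auto simp: F0_def F1_def xlogx_def)
  next
    case False
    then have n2: "2 \<le> n" by simp
    define d where "d i m = e i m - (if i = 0 then F0 p m else F1 p m)" for i m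
    have dz: "d 0 m = 0 \<and> d 1 m = 0" if "m < n" for m using less.IH[OF that] by (simp add: d_def)
    have key: "d i n = p i 0 ^ n * d 0 n + (1 - p i 0)^n * d 1 n" if i: "i \<le> 1" for i
    proof -
      define b where "b k = real (n choose k) * p i 0 ^ k * (1 - p i 0)^(n-k)" for k
      have A: "e i n = (\<Sum>k\<le>n. b k * (e 0 k + e 1 (n-k) + eta1 p i n))"
        unfolding b_def by (rule erec[OF i n2])
      have B: "(if i = 0 then F0 p n else F1 p n) = (\<Sum>k\<le>n. b k * (F0 p k + F1 p (n-k) + eta1 p i n))"
        unfolding b_def by (rule f_rec[OF p_range p_stoch i n2, symmetric])
      have "d i n = (\<Sum>k\<le>n. b k * (e 0 k + e 1 (n-k) + eta1 p i n)) - (\<Sum>k\<le>n. b k * (F0 p k + F1 p (n-k) + eta1 p i n))"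
        unfolding d_def A B ..
      also have "\<dots> = (\<Sum>k\<le>n. b k * (d 0 k + d 1 (n-k)))"
        unfolding sum_subtractf[symmetric] by (rule sum.cong) (auto simp: d_def algebra_simps)
      also have "\<dots> = (\<Sum>k\<le>n. (if k = n then b n * d 0 n else 0) + (if k = 0 then b 0 * d 1 n else 0))"
      proof (rule sum.cong[OF refl])
        fix k assume k: "k \<in> {..n}"
        have "d 0 k = (if k = n then d 0 n else 0)" using dz[of k] k by auto
        moreover have "d 1 (n-k) = (if k = 0 then d 1 n else 0)" using dz[of "n-k"] k n2 by auto
        ultimately show "b k * (d 0 k + d 1 (n-k)) = (if k = n then b n * d 0 n else 0) + (if k = 0 then b 0 * d 1 n else 0)"
          by (auto simp: algebra_simps)
      qed
      also have "\<dots> = b n * d 0 n + b 0 * d 1 n" by (simp add: sum.distrib sum.delta)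
      finally show ?thesis by (simp add: b_def)
    qed
    have r0: "1 - p 0 0 = p 0 1" and r1: "1 - p 1 0 = p 1 1" using p_stoch[of 0] p_stoch[of 1] by auto
    have "d 0 n = 0 \<and> d 1 n = 0"
    proof (rule two_eq)
      show "d 0 n = p 0 0 ^ n * d 0 n + p 0 1 ^ n * d 1 n" using key[of 0] r0 by simp
      show "d 1 n = p 1 0 ^ n * d 0 n + p 1 1 ^ n * d 1 n" using key[of 1] r1 by simp
      show "p 0 0 ^ n + p 0 1 ^ n < 1"
        using pow_lt[of "p 0 0" n] pow_lt[of "p 0 1" n] p_range[of 0 0] p_range[of 0 1] p_stoch[of 0] n2 by simp
      show "p 1 0 ^ n + p 1 1 ^ n < 1"
        using pow_lt[of "p 1 0" n] pow_lt[of "p 1 1" n] p_range[of 1 0] p_range[of 1 1] p_stoch[of 1] n2 by simp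
    qed (use p_range[of 0 0] p_range[of 0 1] p_range[of 1 0] p_range[of 1 1] in auto)
    then show ?thesis by (simp add: d_def)
  qed
qed

theorem lemma6p3:
  fixes p :: "nat \<Rightarrow> nat \<Rightarrow> real"
    and M :: "'a measure"
    and X Z :: "nat \<Rightarrow> nat \<Rightarrow> 'a \<Rightarrow> real"
  assumes "prob_space M"
    and p_range: "\<And>i j. i \<le> 1 \<Longrightarrow> j \<le> 1 \<Longrightarrow> 0 < p i j \<and> p i j < 1"
    and p_stoch: "\<And>i. i \<le> 1 \<Longrightarrow> p i 0 + p i 1 = 1"
    and p_nonhalf: "\<exists>i\<le>1. \<exists>j\<le>1. p i j \<noteq> 1/2"
    and meas: "\<And>i n. i \<le> 1 \<Longrightarrow> X i n \<in> borel_measurable M \<and> Z i n \<in> borel_measurable M"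
    and sq_int: "\<And>i n. i \<le> 1 \<Longrightarrow>
          integrable M (\<lambda>\<omega>. (X i n \<omega>)\<^sup>2) \<and> integrable M (\<lambda>\<omega>. (Z i n \<omega>)\<^sup>2)"
    and init: "\<And>i n. i \<le> 1 \<Longrightarrow> n \<le> 1 \<Longrightarrow>
          (AE \<omega> in M. X i n \<omega> = 0) \<and> (AE \<omega> in M. Z i n \<omega> = 0)"
    and rec: "\<And>i n. i \<le> 1 \<Longrightarrow> 2 \<le> n \<Longrightarrow>
          law M X Z i n = rhs_law p (law M X Z) i n"
  shows "\<forall>n. prob_space.expectation M (X 0 n)
              = xlogx (real n) / Htot p
                + (Hent p 1 - Hent p 0) / ((p 0 1 + p 1 0) * Htot p) * real n
                  * (if n \<ge> 2 then 1 else 0)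
          \<and> prob_space.expectation M (X 1 n) = xlogx (real n) / Htot p"
proof -
  interpret prob_space M by fact
  have pm: "(\<lambda>\<omega>. (X i n \<omega>, Z i n \<omega>)) \<in> borel_measurable M" if "i \<le> 1" for i n
    using meas[OF that] by (intro borel_measurable_Pair) auto
  have LP: "prob_space (law M X Z i n) \<and> sets (law M X Z i n) = sets borel" if "i \<le> 1" for i n
    unfolding law_def using prob_space_distr[OF pm[OF that]] by simp
  have Xi: "integrable M (X i n)" if "i \<le> 1" for i n
    using square_integrable_imp_integrable[of "X i n"] meas[OF that] sq_int[OF that] by auto
  have Li: "integrable (law M X Z i n) fst \<and> integral\<^sup>L (law M X Z i n) fst = expectation (X i n)" if "i \<le> 1" for i n
    unfolding law_def integrable_distr_eq[OF pm[OF that] fst_borel] integral_distr[OF pm[OF that] fst_borel]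
    using Xi[OF that] by simp
  define e where "e i n = expectation (X i n)" for i n
  have e0: "e i n = 0" if "i \<le> 1" "n \<le> 1" for i n
  proof -
    have "e i n = integral\<^sup>L M (\<lambda>_. 0::real)" unfolding e_def
      using init[OF that] meas[OF that(1)] by (intro integral_cong_AE) auto
    then show ?thesis by simp
  qed
  have erec: "e i n = (\<Sum>k\<le>n. real (n choose k) * p i 0 ^ k * (1 - p i 0)^(n-k) * (e 0 k + e 1 (n-k) + eta1 p i n))"
    if i: "i \<le> 1" and n: "2 \<le> n" for i n
  proof -
    have q: "0 < p i 0" "p i 0 < 1" using p_range[OF i, of 0] by auto
    define K where "K k = distr (law M X Z 0 k \<Otimes>\<^sub>M law M X Z 1 (n - k)) borel
        (\<lambda>((x0, z0), (x1, z1)). (x0 + x1 + eta1 p i n, z0 + z1 + eta2 p i n))" for k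
    have KP: "prob_space (K k) \<and> sets (K k) = sets borel \<and> integrable (K k) fst \<and>
       integral\<^sup>L (K k) fst = e 0 k + e 1 (n - k) + eta1 p i n" for k
    proof -
      have a: "prob_space (law M X Z 0 k)" "sets (law M X Z 0 k) = sets borel" "integrable (law M X Z 0 k) fst"
        using LP[of 0 k] Li[of 0 k] by auto
      have b: "prob_space (law M X Z 1 (n-k))" "sets (law M X Z 1 (n-k)) = sets borel" "integrable (law M X Z 1 (n-k)) fst"
        using LP[of 1 "n-k"] Li[of 1 "n-k"] by auto
      show ?thesis unfolding K_def
        using prod_part[OF a(1) a(2) b(1) b(2) a(3) b(3), of "eta1 p i n" "eta2 p i n"] Li[of 0 k] Li[of 1 "n-k"]
        by (simp add: e_def)
    qed
    have "e i n = integral\<^sup>L (law M X Z i n) fst" using Li[OF i] by (simp add: e_def)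
    also have "\<dots> = integral\<^sup>L (measure_pmf (binomial_pmf n (p i 0)) \<bind> K) fst"
      unfolding rec[OF i n] rhs_law_def K_def ..
    also have "\<dots> = (\<Sum>k\<in>{..n}. pmf (binomial_pmf n (p i 0)) k * integral\<^sup>L (K k) fst)"
      by (rule bind_integral[where N=borel]) (use KP q fst_borel in auto)
    also have "\<dots> = (\<Sum>k\<le>n. real (n choose k) * p i 0 ^ k * (1 - p i 0)^(n-k) * (e 0 k + e 1 (n-k) + eta1 p i n))"
      using KP q by simp
    finally show ?thesis .
  qed
  have "e 0 n = F0 p n \<and> e 1 n = F1 p n" for n
    by (rule alg_main[OF p_range p_stoch e0 erec]) auto
  then show ?thesis by (simp add: e_def F0_def F1_def)
qed

end
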